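(* Let $M_1,M_2$ be connected Bowditch boundaries of relatively hyperbolic pairs $(G_1,\mathbb{P}_1)$ and $(G_2,\mathbb{P}_2)$, and let $T(M_i)$ denote the exact cut pair/cut point tree of $M_i$. Each homeomorphism $f\colon M_1\to M_2$ induces a graph isomorphism $\hat f\colon T(M_1)\to T(M_2)$. Moreover, if $M_3$ is also such a boundary and $f_i\colon M_i\to M_{i+1}$ ($i=1,2$) are homeomorphisms, then $\widehat{f_2f_1}=\hat f_2\hat f_1$, and $\widehat{\mathrm{id}}=\mathrm{id}$.
   Context: Relatively hyperbolic pair $(G,\mathbb{P})$: $G$ finitely generated, $\mathbb{P}$ a finite family of finitely generated subgroups, such that the cusped space (Cayley graph of $G$ with respect to a finite generating set containing generators of each $P$, with a warped-product horoball $\Gamma_{gP}\times_{e^{-t}}[0,\infty)$ attached along each coset subgraph $\Gamma_{gP}$) is Gromov hyperbolic; its Gromov boundary is the Bowditch boundary $\partial(G,\mathbb{P})$. For a compact connected locally connected metrizable space $M$: a cut point is $\eta$ with $M\setminus\{\eta\}$ disconnected. A cut pair is a set of two distinct non-cut points $\{\zeta,\xi\}$ with $M\setminus\{\zeta,\xi\}$ disconnected. For a non-cut point $\zeta$, its valence is the number of ends of $M\setminus\{\zeta\}$. A cut pair $\{\zeta,\xi\}$ is exact if both points have valence equal to the number of components of $M\setminus\{\zeta,\xi\}$; it is inseparable if no other exact cut pair $\{a,b\}$ has $\zeta,\xi$ in distinct components of $M\setminus\{a,b\}$. Let $Z$ be the set of all cut points and inseparable exact cut pairs. Two points of $M\setminus\bigcup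 Z$ are equivalent if no element of $Z$ separates them; a piece is the closure of an equivalence class with at least two points, and $\Pi$ is the set of pieces. $T(M)$ is the bipartite graph with vertex set $Z\sqcup\Pi$, where $z\in Z$ and $\pi\in\Pi$ are adjacent iff $z\subseteq\pi$. *)

theory Defs
  imports "HOL-Analysis.Analysis" "HOL-Library.Extended_Nat"
begin

definition ecard :: "'x set \<Rightarrow> enat" where
  "ecard A = (if finite A then enat (card A) else \<infinity>)"

definition num_ends :: "'a topology \<Rightarrow> enat" where
  "num_ends Y = Sup {ecard {C \<in> connected_components_of (subtopology Y (topspace Y - K)).
                         \<not> compactin Y (Y closure_of C)} | K. compactin Y K}"

definition cut_point :: "'a topology \<Rightarrow> 'a \<Rightarrow> bool" where
  "cut_point X \<eta> \<longleftrightarrow> \<eta> \<in> topspace X \<and> \<not> connected_space (subtopology X (topspace X - {\<eta>}))"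

definition noncut_point :: "'a topology \<Rightarrow> 'a \<Rightarrow> bool" where
  "noncut_point X \<eta> \<longleftrightarrow> \<eta> \<in> topspace X \<and> \<not> cut_point X \<eta>"

definition cut_pair :: "'a topology \<Rightarrow> 'a set \<Rightarrow> bool" where
  "cut_pair X P \<longleftrightarrow> (\<exists>\<zeta> \<xi>. P = {\<zeta>, \<xi>} \<and> \<zeta> \<noteq> \<xi> \<and> noncut_point X \<zeta> \<and> noncut_point X \<xi>
       \<and> \<not> connected_space (subtopology X (topspace X - P)))"

definition valence :: "'a topology \<Rightarrow> 'a \<Rightarrow> enat" where
  "valence X \<zeta> = num_ends (subtopology X (topspace X - {\<zeta>}))"

definition exact_cut_pair :: "'a topology \<Rightarrow> 'a set \<Rightarrow> bool" where
  "exact_cut_pair X P \<longleftrightarrow> cut_pair X P \<and>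
     (\<forall>\<zeta>\<in>P. valence X \<zeta> = ecard (connected_components_of (subtopology X (topspace X - P))))"

definition separates :: "'a topology \<Rightarrow> 'a set \<Rightarrow> 'a \<Rightarrow> 'a \<Rightarrow> bool" where
  "separates X S a b \<longleftrightarrow> a \<in> topspace X - S \<and> b \<in> topspace X - S \<and>
     \<not> (\<exists>C\<in>connected_components_of (subtopology X (topspace X - S)). a \<in> C \<and> b \<in> C)"

definition inseparable_exact_cut_pair :: "'a topology \<Rightarrow> 'a set \<Rightarrow> bool" where
  "inseparable_exact_cut_pair X P \<longleftrightarrow> exact_cut_pair X P \<and>
     (\<forall>\<zeta> \<xi>. P = {\<zeta>, \<xi>} \<longrightarrow> \<not> (\<exists>Q. exact_cut_pair X Q \<and> Q \<noteq> P \<and> separates X Q \<zeta> \<xi>))"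

definition Zset :: "'a topology \<Rightarrow> 'a set set" where
  "Zset X = {{\<eta>} | \<eta>. cut_point X \<eta>} \<union> {P. inseparable_exact_cut_pair X P}"

definition piece_equiv :: "'a topology \<Rightarrow> 'a \<Rightarrow> 'a \<Rightarrow> bool" where
  "piece_equiv X x y \<longleftrightarrow> x \<in> topspace X - \<Union>(Zset X) \<and> y \<in> topspace X - \<Union>(Zset X) \<and>
     (\<forall>z\<in>Zset X. \<not> separates X z x y)"

definition pieces :: "'a topology \<Rightarrow> 'a set set" where
  "pieces X = {X closure_of E | E. (\<exists>x. E = {y. piece_equiv X x y} \<and> piece_equiv X x x)
                                  \<and> (\<exists>a b. a \<in> E \<and> b \<in> E \<and> a \<noteq> b)}"

definition T_vertices :: "'a topology \<Rightarrow> ('a set + 'a set) set" where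
  "T_vertices X = Inl ` Zset X \<union> Inr ` pieces X"

definition T_adj :: "'a topology \<Rightarrow> ('a set + 'a set) \<Rightarrow> ('a set + 'a set) \<Rightarrow> bool" where
  "T_adj X u v \<longleftrightarrow> u \<in> T_vertices X \<and> v \<in> T_vertices X \<and>
     ((\<exists>z p. u = Inl z \<and> v = Inr p \<and> z \<subseteq> p) \<or> (\<exists>z p. u = Inr p \<and> v = Inl z \<and> z \<subseteq> p))"

definition T_map :: "('a \<Rightarrow> 'b) \<Rightarrow> ('a set + 'a set) \<Rightarrow> ('b set + 'b set)" where
  "T_map f v = (case v of Inl z \<Rightarrow> Inl (f ` z) | Inr p \<Rightarrow> Inr (f ` p))"

definition T_graph_iso :: "'a topology \<Rightarrow> 'b topology \<Rightarrow> (('a set + 'a set) \<Rightarrow> ('b set + 'b set)) \<Rightarrow> bool" where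
  "T_graph_iso X Y h \<longleftrightarrow> bij_betw h (T_vertices X) (T_vertices Y) \<and>
     (\<forall>u\<in>T_vertices X. \<forall>v\<in>T_vertices X. T_adj X u v \<longleftrightarrow> T_adj Y (h u) (h v))"

text \<open>Topological properties of a connected Bowditch boundary used by the paper.\<close>
definition boundary_like :: "'a topology \<Rightarrow> bool" where
  "boundary_like X \<longleftrightarrow> compact_space X \<and> connected_space X \<and> locally_connected_space X
     \<and> metrizable_space X"

end

theory Submission
  imports Defs
begin

lemma hm_sub:
  assumes H: "homeomorphic_map X Y f" and S: "S \<subseteq> topspace X"
  shows "homeomorphic_map (subtopology X S) (subtopology Y (f ` S)) f"
proof -
  have "f ` S \<subseteq> topspace Y" using S homeomorphic_imp_surjective_map[OF H] by blast
  then show ?thesis using S by (intro homeomorphic_map_subtopologies[OF H]) (auto simp: Int_absorb1)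
qed

lemma hm_diff:
  assumes H: "homeomorphic_map X Y f" and S: "S \<subseteq> topspace X"
  shows "topspace Y - f ` S = f ` (topspace X - S)"
proof -
  have "f ` (topspace X - S) = f ` topspace X - f ` S"
    using inj_on_image_set_diff[OF homeomorphic_imp_injective_map[OF H], of "topspace X" S] S by blast
  then show ?thesis using homeomorphic_imp_surjective_map[OF H] by simp
qed

lemma hm_sub_compl:
  assumes H: "homeomorphic_map X Y f" and S: "S \<subseteq> topspace X"
  shows "homeomorphic_map (subtopology X (topspace X - S)) (subtopology Y (topspace Y - f ` S)) f"
  using hm_sub[OF H, of "topspace X - S"] hm_diff[OF H S] by auto

lemma hm_conn:
  assumes H: "homeomorphic_map X Y f" and S: "S \<subseteq> topspace X"
  shows "connected_space (subtopology Y (topspace Y - f ` S)) = connected_space (subtopology X (topspace X - S))"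
  using hm_sub_compl[OF H S] homeomorphic_connected_space homeomorphic_map_imp_homeomorphic_space by blast

lemma hm_cc:
  assumes H: "homeomorphic_map X Y f" and S: "S \<subseteq> topspace X"
  shows "connected_components_of (subtopology Y (topspace Y - f ` S)) = (image f) ` connected_components_of (subtopology X (topspace X - S))"
  using hm_sub_compl[OF H S] homeomorphic_map_connected_components_of by blast

lemma ecard_image: "inj_on h A \<Longrightarrow> ecard (h ` A) = ecard A"
  by (simp add: ecard_def finite_image_iff card_image)

lemma inj_image_sets: "inj_on f T \<Longrightarrow> inj_on (image f) {S. S \<subseteq> T}"
  by (auto simp: inj_on_def inj_on_image_eq_iff)

lemma hm_preimage:
  assumes H: "homeomorphic_map X Y f" and Q: "Q \<subseteq> topspace Y"
  shows "\<exists>P. P \<subseteq> topspace X \<and> Q = f ` P"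
  using homeomorphic_imp_surjective_map[OF H] Q by (metis subset_imageE)

lemma ends_term:
  assumes H: "homeomorphic_map X Y f" and K: "K \<subseteq> topspace X"
  shows "ecard {C \<in> connected_components_of (subtopology Y (topspace Y - f ` K)). \<not> compactin Y (Y closure_of C)}
       = ecard {D \<in> connected_components_of (subtopology X (topspace X - K)). \<not> compactin X (X closure_of D)}"
proof -
  let ?A = "{D \<in> connected_components_of (subtopology X (topspace X - K)). \<not> compactin X (X closure_of D)}"
  have sub: "D \<subseteq> topspace X" if "D \<in> connected_components_of (subtopology X (topspace X - K))" for D
    using connected_components_of_subset[OF that] by auto
  have "{C \<in> connected_components_of (subtopology Y (topspace Y - f ` K)). \<not> compactin Y (Y closure_of C)} = image f ` ?A"
  proof -
    have "\<not> compactin Y (Y closure_of (f ` D)) \<longleftrightarrow> \<not> compactin X (X closure_of D)"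
      if "D \<in> connected_components_of (subtopology X (topspace X - K))" for D
      using homeomorphic_map_closure_of[OF H sub[OF that]] homeomorphic_map_compactness[OF H, of "X closure_of D"]
      by (simp add: closure_of_subset_topspace)
    then show ?thesis unfolding hm_cc[OF H K] by auto
  qed
  moreover have "inj_on (image f) ?A"
    by (rule inj_on_subset[OF inj_image_sets[OF homeomorphic_imp_injective_map[OF H]]]) (auto dest: sub)
  ultimately show ?thesis by (simp add: ecard_image)
qed

lemma hm_num_ends:
  assumes H: "homeomorphic_map X Y f"
  shows "num_ends Y = num_ends X"
  unfolding num_ends_def
proof (rule arg_cong[where f=Sup])
  show "{ecard {C \<in> connected_components_of (subtopology Y (topspace Y - K)). \<not> compactin Y (Y closure_of C)} | K. compactin Y K} =
    {ecard {C \<in> connected_components_of (subtopology X (topspace X - K)). \<not> compactin X (X closure_of C)} | K. compactin X K}"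
  proof (intro set_eqI iffI)
    fix e assume "e \<in> {ecard {C \<in> connected_components_of (subtopology Y (topspace Y - K)). \<not> compactin Y (Y closure_of C)} | K. compactin Y K}"
    then obtain K where K: "compactin Y K" and e: "e = ecard {C \<in> connected_components_of (subtopology Y (topspace Y - K)). \<not> compactin Y (Y closure_of C)}" by blast
    obtain P where P: "P \<subseteq> topspace X" "K = f ` P" using hm_preimage[OF H compactin_subset_topspace[OF K]] by blast
    have "compactin X P" using K P homeomorphic_map_compactness[OF H] by blast
    then show "e \<in> {ecard {C \<in> connected_components_of (subtopology X (topspace X - K)). \<not> compactin X (X closure_of C)} | K. compactin X K}"
      using ends_term[OF H P(1)] e P(2) by blast
  next
    fix e assume "e \<in> {ecard {C \<in> connected_components_of (subtopology X (topspace X - K)). \<not> compactin X (X closure_of C)} | K. compactin X K}"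
    then obtain K where K: "compactin X K" and e: "e = ecard {C \<in> connected_components_of (subtopology X (topspace X - K)). \<not> compactin X (X closure_of C)}" by blast
    have "compactin Y (f ` K)" using K homeomorphic_map_compactness[OF H] compactin_subset_topspace by blast
    moreover have "e = ecard {C \<in> connected_components_of (subtopology Y (topspace Y - f ` K)). \<not> compactin Y (Y closure_of C)}"
      using ends_term[OF H compactin_subset_topspace[OF K]] e by simp
    ultimately show "e \<in> {ecard {C \<in> connected_components_of (subtopology Y (topspace Y - K)). \<not> compactin Y (Y closure_of C)} | K. compactin Y K}"
      by blast
  qed
qed

lemma hm_basic:
  assumes H: "homeomorphic_map X Y f"
  shows "inj_on f (topspace X)" "f ` topspace X = topspace Y"
  using homeomorphic_imp_injective_map[OF H] homeomorphic_imp_surjective_map[OF H] by auto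

lemma hm_cut_point:
  assumes H: "homeomorphic_map X Y f" and x: "x \<in> topspace X"
  shows "cut_point Y (f x) \<longleftrightarrow> cut_point X x"
  using hm_conn[OF H, of "{x}"] x hm_basic[OF H] unfolding cut_point_def by auto

lemma hm_noncut:
  assumes H: "homeomorphic_map X Y f" and x: "x \<in> topspace X"
  shows "noncut_point Y (f x) \<longleftrightarrow> noncut_point X x"
  using hm_cut_point[OF H x] x hm_basic[OF H] unfolding noncut_point_def by auto

lemma hm_valence:
  assumes H: "homeomorphic_map X Y f" and x: "x \<in> topspace X"
  shows "valence Y (f x) = valence X x"
  using hm_num_ends[OF hm_sub_compl[OF H, of "{x}"]] x unfolding valence_def by simp

lemma cut_pair_sub: "cut_pair X P \<Longrightarrow> P \<subseteq> topspace X"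
  unfolding cut_pair_def noncut_point_def by auto

lemma exact_sub: "exact_cut_pair X P \<Longrightarrow> P \<subseteq> topspace X"
  unfolding exact_cut_pair_def using cut_pair_sub by auto

lemma hm_cut_pair:
  assumes H: "homeomorphic_map X Y f" and P: "P \<subseteq> topspace X"
  shows "cut_pair Y (f ` P) \<longleftrightarrow> cut_pair X P"
proof
  assume "cut_pair X P"
  then obtain a b where ab: "P = {a,b}" "a \<noteq> b" "noncut_point X a" "noncut_point X b"
     "\<not> connected_space (subtopology X (topspace X - P))" unfolding cut_pair_def by blast
  have "f a \<noteq> f b" using ab P hm_basic(1)[OF H] by (auto simp: inj_on_def)
  then show "cut_pair Y (f ` P)" unfolding cut_pair_def
    using ab hm_noncut[OF H] P hm_conn[OF H P] by (intro exI[of _ "f a"] exI[of _ "f b"]) auto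
next
  assume "cut_pair Y (f ` P)"
  then obtain c d where cd: "f ` P = {c,d}" "c \<noteq> d" "noncut_point Y c" "noncut_point Y d"
     "\<not> connected_space (subtopology Y (topspace Y - f ` P))" unfolding cut_pair_def by blast
  obtain a b where ab: "a \<in> P" "b \<in> P" "c = f a" "d = f b" using cd(1) by (metis imageE insertI1 insertI2)
  have Pab: "P = {a,b}"
  proof -
    have "p = a \<or> p = b" if "p \<in> P" for p
    proof -
      have "f p \<in> {f a, f b}" using that cd(1) ab by auto
      then show ?thesis using hm_basic(1)[OF H] P that ab by (auto simp: inj_on_def)
    qed
    then show ?thesis using ab by auto
  qed
  show "cut_pair X P" unfolding cut_pair_def
    using cd ab Pab hm_noncut[OF H] P hm_conn[OF H P] by (intro exI[of _ a] exI[of _ b]) auto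
qed

lemma hm_ecard_cc:
  assumes H: "homeomorphic_map X Y f" and S: "S \<subseteq> topspace X"
  shows "ecard (connected_components_of (subtopology Y (topspace Y - f ` S))) = ecard (connected_components_of (subtopology X (topspace X - S)))"
proof -
  have "inj_on (image f) (connected_components_of (subtopology X (topspace X - S)))"
    by (rule inj_on_subset[OF inj_image_sets[OF hm_basic(1)[OF H]]]) (use connected_components_of_subset in fastforce)
  then show ?thesis unfolding hm_cc[OF H S] by (simp add: ecard_image)
qed

lemma hm_exact:
  assumes H: "homeomorphic_map X Y f" and P: "P \<subseteq> topspace X"
  shows "exact_cut_pair Y (f ` P) \<longleftrightarrow> exact_cut_pair X P"
  unfolding exact_cut_pair_def hm_cut_pair[OF H P] hm_ecard_cc[OF H P]
  by (auto simp: hm_valence[OF H subsetD[OF P]])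

lemma hm_separates:
  assumes H: "homeomorphic_map X Y f" and S: "S \<subseteq> topspace X" and a: "a \<in> topspace X" and b: "b \<in> topspace X"
  shows "separates Y (f ` S) (f a) (f b) \<longleftrightarrow> separates X S a b"
proof -
  have mem: "f z \<in> f ` D \<longleftrightarrow> z \<in> D" if "D \<subseteq> topspace X" "z \<in> topspace X" for z D
    using hm_basic(1)[OF H] that by (auto simp: inj_on_def)
  have "(\<exists>C\<in>connected_components_of (subtopology Y (topspace Y - f ` S)). f a \<in> C \<and> f b \<in> C)
      \<longleftrightarrow> (\<exists>D\<in>connected_components_of (subtopology X (topspace X - S)). a \<in> D \<and> b \<in> D)"
  proof -
    have "(\<exists>C\<in>connected_components_of (subtopology Y (topspace Y - f ` S)). f a \<in> C \<and> f b \<in> C)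
      \<longleftrightarrow> (\<exists>D\<in>connected_components_of (subtopology X (topspace X - S)). f a \<in> f ` D \<and> f b \<in> f ` D)"
      unfolding hm_cc[OF H S] by blast
    also have "\<dots> \<longleftrightarrow> (\<exists>D\<in>connected_components_of (subtopology X (topspace X - S)). a \<in> D \<and> b \<in> D)"
    proof (intro bex_cong refl)
      fix D assume "D \<in> connected_components_of (subtopology X (topspace X - S))"
      then have "D \<subseteq> topspace X" using connected_components_of_subset by fastforce
      then show "(f a \<in> f ` D \<and> f b \<in> f ` D) = (a \<in> D \<and> b \<in> D)" using mem a b by blast
    qed
    finally show ?thesis .
  qed
  moreover have "f a \<in> topspace Y - f ` S \<longleftrightarrow> a \<in> topspace X - S" "f b \<in> topspace Y - f ` S \<longleftrightarrow> b \<in> topspace X - S"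
    using hm_diff[OF H S] mem a b by auto
  ultimately show ?thesis unfolding separates_def by blast
qed

lemma hm_insep:
  assumes H: "homeomorphic_map X Y f" and P: "P \<subseteq> topspace X"
  shows "inseparable_exact_cut_pair Y (f ` P) \<longleftrightarrow> inseparable_exact_cut_pair X P"
proof -
  have inj: "inj_on f (topspace X)" using hm_basic[OF H] by simp
  have imgeq: "f ` A = f ` B \<longleftrightarrow> A = B" if "A \<subseteq> topspace X" "B \<subseteq> topspace X" for A B
    using inj_on_image_eq_iff[OF inj that] .
  have "(\<forall>\<zeta> \<xi>. f ` P = {\<zeta>, \<xi>} \<longrightarrow> \<not> (\<exists>Q. exact_cut_pair Y Q \<and> Q \<noteq> f ` P \<and> separates Y Q \<zeta> \<xi>))
     \<longleftrightarrow> (\<forall>a b. P = {a, b} \<longrightarrow> \<not> (\<exists>Q. exact_cut_pair X Q \<and> Q \<noteq> P \<and> separates X Q a b))"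
  proof (intro iffI allI impI notI)
    fix a b assume A: "\<forall>\<zeta> \<xi>. f ` P = {\<zeta>, \<xi>} \<longrightarrow> \<not> (\<exists>Q. exact_cut_pair Y Q \<and> Q \<noteq> f ` P \<and> separates Y Q \<zeta> \<xi>)"
      and ab: "P = {a,b}" and "\<exists>Q. exact_cut_pair X Q \<and> Q \<noteq> P \<and> separates X Q a b"
    then obtain Q where Q: "exact_cut_pair X Q" "Q \<noteq> P" "separates X Q a b" by blast
    have Qs: "Q \<subseteq> topspace X" using exact_sub[OF Q(1)] .
    have "a \<in> topspace X" "b \<in> topspace X" using ab P by auto
    then have "exact_cut_pair Y (f ` Q) \<and> f ` Q \<noteq> f ` P \<and> separates Y (f ` Q) (f a) (f b)"
      using hm_exact[OF H Qs] Q imgeq[OF Qs P] hm_separates[OF H Qs] by auto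
    moreover have "f ` P = {f a, f b}" using ab by auto
    ultimately show False using A by blast
  next
    fix c d assume A: "\<forall>a b. P = {a, b} \<longrightarrow> \<not> (\<exists>Q. exact_cut_pair X Q \<and> Q \<noteq> P \<and> separates X Q a b)"
      and cd: "f ` P = {c,d}" and "\<exists>Q. exact_cut_pair Y Q \<and> Q \<noteq> f ` P \<and> separates Y Q c d"
    then obtain Q where Q: "exact_cut_pair Y Q" "Q \<noteq> f ` P" "separates Y Q c d" by blast
    obtain Q0 where Q0: "Q0 \<subseteq> topspace X" "Q = f ` Q0" using hm_preimage[OF H exact_sub[OF Q(1)]] by blast
    obtain a b where ab: "a \<in> P" "b \<in> P" "c = f a" "d = f b" using cd by (metis imageE insertI1 insertI2)
    have Pab: "P = {a,b}"
    proof -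
      have "p = a \<or> p = b" if "p \<in> P" for p
      proof -
        have "f p \<in> {f a, f b}" using that cd ab by auto
        then show ?thesis using inj P that ab by (auto simp: inj_on_def)
      qed
      then show ?thesis using ab by auto
    qed
    have "a \<in> topspace X" "b \<in> topspace X" using ab P by auto
    then have "exact_cut_pair X Q0 \<and> Q0 \<noteq> P \<and> separates X Q0 a b"
      using hm_exact[OF H Q0(1)] Q Q0 hm_separates[OF H Q0(1)] ab by auto
    then show False using A Pab by blast
  qed
  then show ?thesis unfolding inseparable_exact_cut_pair_def hm_exact[OF H P] by simp
qed

lemma Zset_sub: "z \<in> Zset X \<Longrightarrow> z \<subseteq> topspace X"
  unfolding Zset_def inseparable_exact_cut_pair_def cut_point_def using exact_sub by auto

lemma Zset_I1: "cut_point X \<eta> \<Longrightarrow> {\<eta>} \<in> Zset X"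
  unfolding Zset_def by blast

lemma Zset_I2: "inseparable_exact_cut_pair X P \<Longrightarrow> P \<in> Zset X"
  unfolding Zset_def by blast

lemma Zset_E: "z \<in> Zset X \<Longrightarrow> (\<And>\<eta>. z = {\<eta>} \<Longrightarrow> cut_point X \<eta> \<Longrightarrow> thesis) \<Longrightarrow> (inseparable_exact_cut_pair X z \<Longrightarrow> thesis) \<Longrightarrow> thesis"
  unfolding Zset_def by blast

lemma hm_Zset:
  assumes H: "homeomorphic_map X Y f"
  shows "Zset Y = image f ` Zset X"
proof (intro set_eqI iffI)
  fix z assume z: "z \<in> Zset Y"
  show "z \<in> image f ` Zset X"
  proof (rule Zset_E[OF z])
    fix \<eta> assume a: "z = {\<eta>}" "cut_point Y \<eta>"
    have "\<eta> \<in> topspace Y" using a(2) unfolding cut_point_def by simp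
    then have "\<eta> \<in> f ` topspace X" using hm_basic(2)[OF H] by simp
    then obtain x where x: "x \<in> topspace X" "\<eta> = f x" by auto
    have "cut_point X x" using a(2) x hm_cut_point[OF H x(1)] by simp
    then have "{x} \<in> Zset X" by (rule Zset_I1)
    moreover have "z = f ` {x}" using a x by simp
    ultimately show ?thesis by (rule rev_image_eqI)
  next
    assume b: "inseparable_exact_cut_pair Y z"
    have "exact_cut_pair Y z" using b unfolding inseparable_exact_cut_pair_def by simp
    then have "z \<subseteq> topspace Y" by (rule exact_sub)
    then obtain P where P: "P \<subseteq> topspace X" "z = f ` P" using hm_preimage[OF H] by metis
    have "inseparable_exact_cut_pair X P" using b hm_insep[OF H P(1)] P(2) by simp
    then have "P \<in> Zset X" by (rule Zset_I2)
    then show ?thesis using P(2) by (rule rev_image_eqI)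
  qed
next
  fix z assume "z \<in> image f ` Zset X"
  then obtain w where w: "w \<in> Zset X" "z = f ` w" by blast
  show "z \<in> Zset Y"
  proof (rule Zset_E[OF w(1)])
    fix \<eta> assume a: "w = {\<eta>}" "cut_point X \<eta>"
    then have "\<eta> \<in> topspace X" unfolding cut_point_def by simp
    then have "cut_point Y (f \<eta>)" using a hm_cut_point[OF H] by simp
    then have "{f \<eta>} \<in> Zset Y" by (rule Zset_I1)
    moreover have "z = {f \<eta>}" using a w by simp
    ultimately show ?thesis by simp
  next
    assume b: "inseparable_exact_cut_pair X w"
    have "inseparable_exact_cut_pair Y (f ` w)" using b hm_insep[OF H Zset_sub[OF w(1)]] by simp
    then show ?thesis using w(2) Zset_I2 by simp
  qed
qed

lemma pe_sub: "piece_equiv X x y \<Longrightarrow> x \<in> topspace X \<and> y \<in> topspace X"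
  unfolding piece_equiv_def by blast

lemma hm_pe:
  assumes H: "homeomorphic_map X Y f" and x: "x \<in> topspace X" and y: "y \<in> topspace X"
  shows "piece_equiv Y (f x) (f y) \<longleftrightarrow> piece_equiv X x y"
proof -
  have U: "\<Union>(Zset X) \<subseteq> topspace X" using Zset_sub by blast
  have UY: "\<Union>(Zset Y) = f ` \<Union>(Zset X)" unfolding hm_Zset[OF H] by blast
  have mem: "f z \<in> f ` D \<longleftrightarrow> z \<in> D" if "D \<subseteq> topspace X" "z \<in> topspace X" for z D
    using hm_basic(1)[OF H] that by (auto simp: inj_on_def)
  have 1: "f z \<in> topspace Y - \<Union>(Zset Y) \<longleftrightarrow> z \<in> topspace X - \<Union>(Zset X)" if "z \<in> topspace X" for z
    unfolding UY hm_diff[OF H U] using mem[of "topspace X - \<Union>(Zset X)" z] that by auto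
  have 2: "(\<forall>z\<in>Zset Y. \<not> separates Y z (f x) (f y)) \<longleftrightarrow> (\<forall>z\<in>Zset X. \<not> separates X z x y)"
    unfolding hm_Zset[OF H] using hm_separates[OF H Zset_sub x y] by auto
  show ?thesis unfolding piece_equiv_def using 1[OF x] 1[OF y] 2 by blast
qed

lemma hm_pieces:
  assumes H: "homeomorphic_map X Y f"
  shows "pieces Y = image f ` pieces X"
proof -
  have inj: "inj_on f (topspace X)" using hm_basic[OF H] by simp
  have E: "{y. piece_equiv Y (f x) y} = f ` {y. piece_equiv X x y}" if x: "x \<in> topspace X" for x
  proof (intro set_eqI iffI)
    fix y assume "y \<in> {y. piece_equiv Y (f x) y}"
    then have pe: "piece_equiv Y (f x) y" by simp
    then have "y \<in> f ` topspace X" using pe_sub[OF pe] hm_basic(2)[OF H] by simp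
    then obtain y0 where y0: "y0 \<in> topspace X" "y = f y0" by blast
    then have "piece_equiv X x y0" using pe hm_pe[OF H x y0(1)] by simp
    then show "y \<in> f ` {y. piece_equiv X x y}" using y0 by blast
  next
    fix y assume "y \<in> f ` {y. piece_equiv X x y}"
    then obtain y0 where y0: "piece_equiv X x y0" "y = f y0" by blast
    have "y0 \<in> topspace X" using pe_sub[OF y0(1)] by simp
    then have "piece_equiv Y (f x) y" using y0 hm_pe[OF H x] by simp
    then show "y \<in> {y. piece_equiv Y (f x) y}" by simp
  qed
  have Esub: "{y. piece_equiv X x y} \<subseteq> topspace X" for x using pe_sub by fastforce
  have two: "(\<exists>a b. a \<in> f ` D \<and> b \<in> f ` D \<and> a \<noteq> b) \<longleftrightarrow> (\<exists>a b. a \<in> D \<and> b \<in> D \<and> a \<noteq> b)"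
    if D: "D \<subseteq> topspace X" for D
  proof
    assume "\<exists>a b. a \<in> f ` D \<and> b \<in> f ` D \<and> a \<noteq> b"
    then obtain a b where "a \<in> D" "b \<in> D" "f a \<noteq> f b" by blast
    then show "\<exists>a b. a \<in> D \<and> b \<in> D \<and> a \<noteq> b" by blast
  next
    assume "\<exists>a b. a \<in> D \<and> b \<in> D \<and> a \<noteq> b"
    then obtain a b where ab: "a \<in> D" "b \<in> D" "a \<noteq> b" by blast
    then have "f a \<noteq> f b" using inj D unfolding inj_on_def by blast
    then show "\<exists>a b. a \<in> f ` D \<and> b \<in> f ` D \<and> a \<noteq> b" using ab by blast
  qed
  show ?thesis
  proof (intro set_eqI iffI)
    fix p assume "p \<in> pieces Y"
    then obtain E' x' where p: "p = Y closure_of E'" "E' = {y. piece_equiv Y x' y}" "piece_equiv Y x' x'"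
      "\<exists>a b. a \<in> E' \<and> b \<in> E' \<and> a \<noteq> b" unfolding pieces_def by blast
    have "x' \<in> f ` topspace X" using pe_sub[OF p(3)] hm_basic(2)[OF H] by simp
    then obtain x where x: "x \<in> topspace X" "x' = f x" by blast
    define E where "E = {y. piece_equiv X x y}"
    have EE: "E' = f ` E" using p(2) E[OF x(1)] x unfolding E_def by simp
    have c1: "p = f ` (X closure_of E)" unfolding p(1) EE E_def by (rule homeomorphic_map_closure_of[OF H Esub])
    have c2: "\<exists>a b. a \<in> E \<and> b \<in> E \<and> a \<noteq> b" using p(4) unfolding EE E_def two[OF Esub] .
    have c3: "piece_equiv X x x" using p(3) x hm_pe[OF H] by blast
    have "X closure_of E \<in> pieces X" unfolding pieces_def using c2 c3 E_def by blast
    then show "p \<in> image f ` pieces X" using c1 by blast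
  next
    fix p assume "p \<in> image f ` pieces X"
    then obtain E x where p: "p = f ` (X closure_of E)" "E = {y. piece_equiv X x y}" "piece_equiv X x x"
      "\<exists>a b. a \<in> E \<and> b \<in> E \<and> a \<noteq> b" unfolding pieces_def by blast
    have x: "x \<in> topspace X" using pe_sub[OF p(3)] by simp
    have c1: "p = Y closure_of (f ` E)" unfolding p(1) p(2) by (rule homeomorphic_map_closure_of[OF H Esub, symmetric])
    have c2: "f ` E = {y. piece_equiv Y (f x) y}" unfolding p(2) by (rule E[OF x, symmetric])
    have c3: "piece_equiv Y (f x) (f x)" using hm_pe[OF H x x] p(3) by blast
    have c4: "\<exists>a b. a \<in> f ` E \<and> b \<in> f ` E \<and> a \<noteq> b" unfolding p(2) two[OF Esub] using p(4) p(2) by simp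
    show "p \<in> pieces Y" unfolding pieces_def using c1 c2 c3 c4 by blast
  qed
qed

lemma pieces_sub: "p \<in> pieces X \<Longrightarrow> p \<subseteq> topspace X"
proof -
  assume "p \<in> pieces X"
  then obtain E where "p = X closure_of E" unfolding pieces_def by blast
  then show ?thesis by (simp add: closure_of_subset_topspace)
qed

lemma T_adj_cases:
  "T_adj X (Inl a) (Inr b) \<longleftrightarrow> Inl a \<in> T_vertices X \<and> Inr b \<in> T_vertices X \<and> a \<subseteq> b"
  "T_adj X (Inr a) (Inl b) \<longleftrightarrow> Inr a \<in> T_vertices X \<and> Inl b \<in> T_vertices X \<and> b \<subseteq> a"
  "\<not> T_adj X (Inl a) (Inl b)" "\<not> T_adj X (Inr a) (Inr b)"
  unfolding T_adj_def by auto

lemma hm_T: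
  assumes H: "homeomorphic_map X Y f"
  shows "T_graph_iso X Y (T_map f)"
proof -
  have inj: "inj_on f (topspace X)" using hm_basic[OF H] by simp
  have vsub: "\<exists>S. S \<subseteq> topspace X \<and> (v = Inl S \<or> v = Inr S)" if "v \<in> T_vertices X" for v
    using that Zset_sub pieces_sub unfolding T_vertices_def by blast
  have imgeq: "f ` A = f ` B \<longleftrightarrow> A = B" if "A \<subseteq> topspace X" "B \<subseteq> topspace X" for A B
    using inj_on_image_eq_iff[OF inj that] .
  have imgsub: "f ` A \<subseteq> f ` B \<longleftrightarrow> A \<subseteq> B" if "A \<subseteq> topspace X" "B \<subseteq> topspace X" for A B
    using inj_on_image_subset_iff[OF inj that] .
  have img: "T_map f ` T_vertices X = T_vertices Y"
    unfolding T_vertices_def hm_Zset[OF H] hm_pieces[OF H] by (simp add: image_Un image_image T_map_def)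
  have injT: "inj_on (T_map f) (T_vertices X)"
  proof (rule inj_onI)
    fix u v assume u: "u \<in> T_vertices X" and v: "v \<in> T_vertices X" and e: "T_map f u = T_map f v"
    obtain A where A: "A \<subseteq> topspace X" "u = Inl A \<or> u = Inr A" using vsub[OF u] by blast
    obtain B where B: "B \<subseteq> topspace X" "v = Inl B \<or> v = Inr B" using vsub[OF v] by blast
    from A(2) B(2) show "u = v" using e imgeq[OF A(1) B(1)] by (elim disjE) (simp_all add: T_map_def)
  qed
  have adj: "T_adj X u v \<longleftrightarrow> T_adj Y (T_map f u) (T_map f v)" if u: "u \<in> T_vertices X" and v: "v \<in> T_vertices X" for u v
  proof -
    have uY: "T_map f u \<in> T_vertices Y" and vY: "T_map f v \<in> T_vertices Y" using img u v by auto
    obtain A where A: "A \<subseteq> topspace X" "u = Inl A \<or> u = Inr A" using vsub[OF u] by blast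
    obtain B where B: "B \<subseteq> topspace X" "v = Inl B \<or> v = Inr B" using vsub[OF v] by blast
    from A(2) B(2) u v uY vY show ?thesis
      by (elim disjE) (simp_all add: T_adj_cases T_map_def imgsub[OF A(1) B(1)] imgsub[OF B(1) A(1)])
  qed
  show ?thesis unfolding T_graph_iso_def bij_betw_def using injT img adj by blast
qed

theorem corollary1p2:
  fixes M1 :: "'a topology" and M2 :: "'b topology" and M3 :: "'c topology"
  assumes "boundary_like M1" and "boundary_like M2" and "boundary_like M3"
  shows "(\<forall>f. homeomorphic_map M1 M2 f \<longrightarrow> T_graph_iso M1 M2 (T_map f))
       \<and> (\<forall>f1 f2. homeomorphic_map M1 M2 f1 \<and> homeomorphic_map M2 M3 f2 \<longrightarrow>
              (\<forall>v\<in>T_vertices M1. T_map (f2 \<circ> f1) v = T_map f2 (T_map f1 v)))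
       \<and> (\<forall>v\<in>T_vertices M1. T_map id v = v)"
proof (intro conjI allI impI ballI)
  fix f assume "homeomorphic_map M1 M2 f"
  then show "T_graph_iso M1 M2 (T_map f)" by (rule hm_T)
next
  fix f1 :: "'a \<Rightarrow> 'b" and f2 :: "'b \<Rightarrow> 'c" and v
  show "T_map (f2 \<circ> f1) v = T_map f2 (T_map f1 v)"
    unfolding T_map_def by (cases v) (simp_all add: image_comp)
next
  fix v :: "'a set + 'a set"
  show "T_map id v = v" unfolding T_map_def by (cases v) simp_all
qed

end
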